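(* Let $\beta$ be a totally positive quadratic integer with minimal polynomial $x^2 - Ex + C$, where $E, C \in \mathbb{Z}_{\geq 1}$. (i) If $C \geq 2E$, then $p_\beta(E\beta^2) \geq 4$. (ii) If $C \geq 2E - 3$, then $p_\beta(E\beta^3) \geq 5$. In particular, if $C \geq 2E - 3$, then it is not true that $p_\beta(E\beta^n) = n+1$ for every integer $n \geq 0$.
   Context: A quadratic integer is a root of a monic irreducible quadratic polynomial in $\mathbb{Z}[x]$; it is totally positive if both it and its conjugate are positive. For $\alpha \in \mathbb{C}$, $p_\beta(\alpha) \in \mathbb{Z}_{\geq 0}\cup\{\infty\}$ is the number of polynomials $f \in \mathbb{Z}_{\geq 0}[x]$ (non-negative integer coefficients) with $f(\beta) = \alpha$. Note $E = \beta + \beta'$ is the trace of $\beta$. *)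

theory Defs
  imports "HOL-Computational_Algebra.Polynomial" "HOL-Library.Extended_Nat" Complex_Main
begin

definition reps :: "complex \<Rightarrow> complex \<Rightarrow> nat poly set" where
  "reps \<beta> \<alpha> = {f. poly (map_poly of_nat f) \<beta> = \<alpha>}"

definition p_count :: "complex \<Rightarrow> complex \<Rightarrow> enat" where
  "p_count \<beta> \<alpha> = (if finite (reps \<beta> \<alpha>) then enat (card (reps \<beta> \<alpha>)) else \<infinity>)"

definition totally_positive_root :: "int poly \<Rightarrow> bool" where
  "totally_positive_root p \<longleftrightarrow>
     (\<forall>z::complex. poly (map_poly of_int p) z = 0 \<longrightarrow> z \<in> \<real> \<and> Re z > 0)"

end

theory Submission
  imports Defs
begin

lemma p_count_ge:
  assumes "S \<subseteq> reps b a" "finite S"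
  shows "p_count b a \<ge> enat (card S)"
proof (cases "finite (reps b a)")
  case True
  then show ?thesis using assms card_mono unfolding p_count_def by auto
qed (simp add: p_count_def)

lemma mp_pCons: "map_poly (of_nat :: nat \<Rightarrow> complex) (pCons a p) = pCons (of_nat a) (map_poly of_nat p)"
  by (simp add: map_poly_pCons)

lemma rel: fixes X Y Q b :: complex
  assumes "b^2 - E*b + C = 0" "X = Y + (b^2 - E*b + C) * Q" shows "X = Y"
  using assms by simp

theorem proposition12:
  fixes \<beta> :: complex and E C :: int
  assumes "E \<ge> 1" and "C \<ge> 1"
    and "irreducible [:C, -E, 1:]"
    and "poly (map_poly of_int [:C, -E, 1:]) \<beta> = 0"
    and "totally_positive_root [:C, -E, 1:]"
  shows "(C \<ge> 2 * E \<longrightarrow> p_count \<beta> (of_int E * \<beta> ^ 2) \<ge> 4)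
       \<and> (C \<ge> 2 * E - 3 \<longrightarrow> p_count \<beta> (of_int E * \<beta> ^ 3) \<ge> 5)
       \<and> (C \<ge> 2 * E - 3 \<longrightarrow>
            \<not> (\<forall>n::nat. p_count \<beta> (of_int E * \<beta> ^ n) = enat (n + 1)))"
proof -
  have eq: "\<beta>^2 - of_int E*\<beta> + of_int C = 0"
    using assms(4) by (simp add: map_poly_pCons power2_eq_square algebra_simps)
  have "\<beta> \<in> \<real>" using assms(4,5) unfolding totally_positive_root_def by blast
  then obtain r where r: "\<beta> = of_real r" by (auto elim: Reals_cases)
  have "r^2 - E*r + C = 0"
  proof -
    have "complex_of_real (r^2 - E*r + C) = 0" using eq r by simp
    then show ?thesis by (simp only: of_real_eq_0_iff)
  qed
  hence "real_of_int (E^2 - 4*C) = (2*r - E)^2" by (simp add: power2_eq_square algebra_simps)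
  hence disc: "E^2 \<ge> 4*C"
    by (metis diff_ge_0_iff_ge of_int_0_le_iff zero_le_power2)
  have Cdef: "(of_int C::complex) = of_int E*\<beta> - \<beta>^2" using eq by (simp add: algebra_simps)
  have P1: "p_count \<beta> (of_int E * \<beta> ^ 2) \<ge> 4" if h: "C \<ge> 2*E"
  proof -
    let ?S = "{[:0,0,nat E:], [:0, nat C, 0, 1:], [:nat C, nat (C-E), 1, 1:], [:2*nat C, nat (C-2*E), 2, 1:]}"
    have sub: "?S \<subseteq> reps \<beta> (of_int E * \<beta> ^ 2)"
      using h assms(1,2) by (simp add: reps_def mp_pCons of_nat_nat Cdef; simp add: algebra_simps power2_eq_square power3_eq_cube)
    have card: "card ?S = 4" using h assms(1,2) by simp
    have "enat (card ?S) \<le> p_count \<beta> (of_int E * \<beta> ^ 2)" by (rule p_count_ge[OF sub]) simp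
    thus ?thesis using card by (simp add: numeral_eq_enat eval_nat_numeral)
  qed
  have E6: "E \<ge> 6" if h: "C \<ge> 2*E - 3"
  proof (rule ccontr)
    assume "\<not> E \<ge> 6"
    hence "E \<in> {1,2,3,4,5}" using assms(1) by auto
    moreover have "E \<noteq> 2"
    proof
      assume E2: "E = 2"
      hence "C = 1" using disc assms(2) by (simp add: power2_eq_square)
      hence "[:C, -E, 1:] = [:-1,1:] * [:-1,1:]" using E2 by simp
      moreover have "\<not> is_unit [:-1::int,1:]" using dvd_imp_degree_le[of "[:-1::int,1:]" 1] by auto
      ultimately show False using assms(3) irreducible_def by metis
    qed
    ultimately consider "E=1" | "E=3" | "E=4" | "E=5" by blast
    then show False using h disc assms(2) by cases (simp_all add: power2_eq_square)
  qed
  have P2: "p_count \<beta> (of_int E * \<beta> ^ 3) \<ge> 5" if h: "C \<ge> 2*E - 3"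
  proof -
    have e6: "E \<ge> 6" using E6[OF h] .
    let ?S = "{[:0,0,0,nat E:], [:0, 0, nat C, 0, 1:], [:0, nat C, nat (C-E), 1, 1:],
               [:nat C, nat (C-E), nat (1+C-E), 1, 1:], [:3*nat C, nat (2*C-3*E), nat (3+C-2*E), 2, 1:]}"
    have sub: "?S \<subseteq> reps \<beta> (of_int E * \<beta> ^ 3)"
      using h e6 assms(1,2) by (simp add: reps_def mp_pCons of_nat_nat Cdef; simp add: algebra_simps power2_eq_square power3_eq_cube power4_eq_xxxx)
    have card: "card ?S = 5" using h e6 assms(1,2) by simp
    have "enat (card ?S) \<le> p_count \<beta> (of_int E * \<beta> ^ 3)" by (rule p_count_ge[OF sub]) simp
    thus ?thesis using card by (simp add: numeral_eq_enat eval_nat_numeral)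
  qed
  have P3: "\<not> (\<forall>n::nat. p_count \<beta> (of_int E * \<beta> ^ n) = enat (n + 1))" if h: "C \<ge> 2*E - 3"
  proof
    assume "\<forall>n::nat. p_count \<beta> (of_int E * \<beta> ^ n) = enat (n + 1)"
    hence "p_count \<beta> (of_int E * \<beta> ^ 3) = enat (3 + 1)" by blast
    with P2[OF h] show False by (simp add: numeral_eq_enat)
  qed
  show ?thesis using P1 P2 P3 by blast
qed

end
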